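(* Let $k\geq 2$ be an integer and let $C_k(n)$ denote the number of closed words of length $n$ over the alphabet $\Sigma_k=\{0,1,\ldots,k-1\}$. (a) There exist constants $N>0$ and $c>0$ (depending on $k$) such that $C_k(n)\geq c\,\frac{k^n}{n}$ for all $n>N$. (b) There exist constants $N'>0$ and $c'>0$ (depending on $k$) such that $C_k(n)\leq c'\,\frac{k^n}{n}$ for all $n>N'$.
   Context: A word $u$ is a factor of a word $w$ if $w=xuy$ for some words $x,y$; occurrences of $u$ in $w$ are counted as factor positions (overlaps allowed). A border of a word $w$ is a non-empty word $u$ that is both a proper prefix and a proper suffix of $w$. A word $w$ is closed if $|w|\leq 1$ or if $w$ has a border that occurs exactly twice in $w$ (as a factor). *)

theory Defs
  imports Complex_Main "HOL-Library.Sublist"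
begin

definition occ_count :: "'a list \<Rightarrow> 'a list \<Rightarrow> nat" where
  "occ_count u w = card {i. i + length u \<le> length w \<and> take (length u) (drop i w) = u}"

definition is_border :: "'a list \<Rightarrow> 'a list \<Rightarrow> bool" where
  "is_border u w \<longleftrightarrow> u \<noteq> [] \<and> strict_prefix u w \<and> strict_suffix u w"

definition closed_word :: "'a list \<Rightarrow> bool" where
  "closed_word w \<longleftrightarrow> length w \<le> 1 \<or> (\<exists>u. is_border u w \<and> occ_count u w = 2)"

definition closed_count :: "nat \<Rightarrow> nat \<Rightarrow> nat" where
  "closed_count k n = card {w :: nat list. length w = n \<and> set w \<subseteq> {..<k} \<and> closed_word w}"

end

theory Submission
  imports Defs
begin

definition Wd :: "nat \<Rightarrow> nat \<Rightarrow> nat list set" where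
  "Wd k j = {w. length w = j \<and> set w \<subseteq> {..<k}}"

definition Av :: "nat \<Rightarrow> nat list \<Rightarrow> nat \<Rightarrow> nat list set" where
  "Av k u j = {x \<in> Wd k j. \<not> sublist u x}"

definition Gf :: "nat \<Rightarrow> nat list \<Rightarrow> nat \<Rightarrow> nat list set" where
  "Gf k u j = {y \<in> Wd k j. sublist u y \<and> \<not> sublist u (butlast y)}"

lemma Wd_finite[simp]: "finite (Wd k j)"
  unfolding Wd_def using finite_lists_length_eq[of "{..<k}" j] by (simp add: conj_commute)

lemma Wd_card[simp]: "card (Wd k j) = k ^ j"
  unfolding Wd_def using card_lists_length_eq[of "{..<k}" j] by (simp add: conj_commute)

lemma Av_finite[simp]: "finite (Av k u j)" unfolding Av_def by simp
lemma Gf_finite[simp]: "finite (Gf k u j)" unfolding Gf_def by simp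

lemma Av_step: "card (Av k u (Suc j)) + card (Gf k u (Suc j)) \<le> k * card (Av k u j)"
proof -
  have sub: "Av k u (Suc j) \<union> Gf k u (Suc j) \<subseteq> (\<lambda>(x,c). x @ [c]) ` (Av k u j \<times> {..<k})"
  proof
    fix y assume y: "y \<in> Av k u (Suc j) \<union> Gf k u (Suc j)"
    then have len: "length y = Suc j" and st: "set y \<subseteq> {..<k}" by (auto simp: Av_def Gf_def Wd_def)
    then have ne: "y \<noteq> []" by auto
    have yy: "y = butlast y @ [last y]" using ne by simp
    have nb: "\<not> sublist u (butlast y)"
      using y sublist_order.order.trans[OF _ sublist_butlast[of y]] by (auto simp: Av_def Gf_def)
    have "butlast y \<in> Av k u j" using nb len st by (auto simp: Av_def Wd_def dest: in_set_butlastD)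
    moreover have "last y \<in> {..<k}" using st ne last_in_set by blast
    ultimately show "y \<in> (\<lambda>(x,c). x @ [c]) ` (Av k u j \<times> {..<k})" using yy by force
  qed
  have disj: "Av k u (Suc j) \<inter> Gf k u (Suc j) = {}" by (auto simp: Av_def Gf_def)
  have "card (Av k u (Suc j)) + card (Gf k u (Suc j)) = card (Av k u (Suc j) \<union> Gf k u (Suc j))"
    using disj by (simp add: card_Un_disjoint)
  also have "\<dots> \<le> card ((\<lambda>(x,c). x @ [c]) ` (Av k u j \<times> {..<k}))"
    by (rule card_mono[OF _ sub]) simp
  also have "\<dots> \<le> card (Av k u j \<times> {..<k})" by (rule card_image_le) simp
  also have "\<dots> = k * card (Av k u j)" by (simp add: card_cartesian_product)
  finally show ?thesis .
qed

lemma Av_first: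
  assumes u: "u \<in> Wd k m" and m: "m \<ge> 1"
  shows "card (Av k u j) \<le> (\<Sum>s\<in>{1..m}. card (Gf k u (j + s)))"
proof -
  define f where "f x = take (LEAST e. sublist u (take e (x @ u))) (x @ u)" for x
  have key: "f x \<in> (\<Union>s\<in>{1..m}. Gf k u (j + s)) \<and> take j (f x) = x" if x: "x \<in> Av k u j" for x
  proof -
    define e where "e = (LEAST e. sublist u (take e (x @ u)))"
    have lx: "length x = j" and sx: "set x \<subseteq> {..<k}" and nx: "\<not> sublist u x"
      using x by (auto simp: Av_def Wd_def)
    have lu: "length u = m" and su: "set u \<subseteq> {..<k}" using u by (auto simp: Wd_def)
    have P: "sublist u (take (j + m) (x @ u))" using lx lu by simp
    have ele: "e \<le> j + m" unfolding e_def by (rule Least_le[where P="\<lambda>e. sublist u (take e (x @ u))", OF P])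
    have Pe: "sublist u (take e (x @ u))" unfolding e_def by (rule LeastI[where P="\<lambda>e. sublist u (take e (x @ u))", OF P])
    have egt: "e > j"
    proof (rule ccontr)
      assume "\<not> j < e"
      then have "take e (x @ u) = take e x" using lx by simp
      then have "sublist u (take e x)" using Pe by metis
      then have "sublist u x" using sublist_order.order.trans[OF _ sublist_take[of e x]] by blast
      then show False using nx by simp
    qed
    have nb: "\<not> sublist u (butlast (take e (x @ u)))"
    proof
      assume "sublist u (butlast (take e (x @ u)))"
      moreover have "butlast (take e (x @ u)) = take (e - 1) (x @ u)" using ele lx lu by (subst butlast_take) auto
      ultimately have "sublist u (take (e - 1) (x @ u))" by simp
      moreover have "e - 1 < e" using egt by simp
      ultimately show False unfolding e_def using not_less_Least by blast
    qed
    have len: "length (take e (x @ u)) = e" using ele lx lu by simp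
    have st: "set (take e (x @ u)) \<subseteq> {..<k}" using sx su by (auto dest: in_set_takeD)
    have "take e (x @ u) \<in> Gf k u (j + (e - j))"
      using len st Pe nb egt by (simp add: Gf_def Wd_def)
    moreover have "e - j \<in> {1..m}" using egt ele by auto
    moreover have "take j (take e (x @ u)) = x" using egt lx by simp
    ultimately show ?thesis unfolding f_def e_def[symmetric] by blast
  qed
  have "inj_on f (Av k u j)" by (rule inj_onI) (metis key)
  then have "card (Av k u j) = card (f ` Av k u j)" by (simp add: card_image)
  also have "\<dots> \<le> card (\<Union>s\<in>{1..m}. Gf k u (j + s))"
    by (rule card_mono) (use key in auto)
  also have "\<dots> \<le> (\<Sum>s\<in>{1..m}. card (Gf k u (j + s)))" by (rule card_UN_le) simp
  finally show ?thesis .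
qed

lemma geom_le: fixes K :: real assumes "K \<ge> 2" shows "(\<Sum>s\<in>{1..m}. K^s) \<le> 2 * K^m"
proof (induction m)
  case 0 then show ?case by simp
next
  case (Suc m)
  have "(\<Sum>s\<in>{1..Suc m}. K^s) = (\<Sum>s\<in>{1..m}. K^s) + K^Suc m" by simp
  also have "\<dots> \<le> 2*K^m + K^Suc m" using Suc by simp
  also have "\<dots> \<le> 2 * K^Suc m" using assms by (simp add: mult_right_mono)
  finally show ?case .
qed

lemma decay_step:
  fixes F :: "nat \<Rightarrow> real" and K :: real
  assumes K: "K \<ge> 2" and m: "m \<ge> 1" and nn: "\<And>j. F j \<ge> 0"
    and mono: "\<And>j. F (Suc j) \<le> F j"
    and rec: "\<And>j. F j \<le> (\<Sum>s\<in>{1..m}. K^s * (F (j+s-1) - F (j+s)))"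
  shows "(1 + m/(2*K^m)) * F (L + 2*m) \<le> F L"
proof -
  have dec: "F j \<le> F i" if "i \<le> j" for i j
    using decseq_SucI[of F, OF mono] that by (simp add: decseq_def)
  have tel: "(\<Sum>i<m. F (L+i+s-1) - F (L+i+s)) \<le> F L - F (L + 2*m)" if s: "s \<in> {1..m}" for s
  proof -
    have "(\<Sum>i<m. F (L+i+s-1) - F (L+i+s)) = (\<Sum>i<m. F (L+s-1+i) - F (L+s-1+Suc i))"
      using s by (intro sum.cong) (auto simp: algebra_simps)
    also have "\<dots> = F (L+s-1) - F (L+s-1+m)"
      using sum_lessThan_telescope'[of "\<lambda>i. F (L+s-1+i)" m] by simp
    also have "\<dots> \<le> F L - F (L+2*m)"
    proof -
      have "F (L+s-1) \<le> F L" using s by (intro dec) auto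
      moreover have "F (L+2*m) \<le> F (L+s-1+m)" using s by (intro dec) auto
      ultimately show ?thesis by linarith
    qed
    finally show ?thesis .
  qed
  have "(\<Sum>i<m. F (L+i)) \<le> (\<Sum>i<m. \<Sum>s\<in>{1..m}. K^s * (F (L+i+s-1) - F (L+i+s)))"
    by (rule sum_mono) (use rec in auto)
  also have "\<dots> = (\<Sum>s\<in>{1..m}. K^s * (\<Sum>i<m. F (L+i+s-1) - F (L+i+s)))"
    by (subst sum.swap) (simp add: sum_distrib_left)
  also have "\<dots> \<le> (\<Sum>s\<in>{1..m}. K^s * (F L - F (L + 2*m)))"
    by (rule sum_mono, rule mult_left_mono) (use tel K in auto)
  also have "\<dots> = (\<Sum>s\<in>{1..m}. K^s) * (F L - F (L + 2*m))" by (simp add: sum_distrib_right)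
  also have "\<dots> \<le> 2*K^m * (F L - F (L + 2*m))"
    by (rule mult_right_mono) (use geom_le[OF K] dec[of L "L+2*m"] in auto)
  finally have A: "(\<Sum>i<m. F (L+i)) \<le> 2*K^m * (F L - F (L + 2*m))" .
  have "(\<Sum>i<m. F (L+2*m)) \<le> (\<Sum>i<m. F (L+i))" by (rule sum_mono) (auto intro: dec)
  then have B: "m * F (L+2*m) \<le> 2*K^m * (F L - F (L + 2*m))" using A by simp
  have Kp: "K^m > 0" using K by simp
  have "(1 + m/(2*K^m)) * F (L + 2*m) = F (L+2*m) + (m * F (L+2*m)) / (2*K^m)"
    by (simp add: algebra_simps)
  also have "\<dots> \<le> F (L+2*m) + (2*K^m * (F L - F (L + 2*m))) / (2*K^m)"
    using B Kp by (intro add_left_mono divide_right_mono) auto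
  also have "\<dots> = F L" using K by simp
  finally show ?thesis .
qed

lemma decay_iter:
  fixes F :: "nat \<Rightarrow> real" and a :: real
  assumes a: "a \<ge> 0" and st: "\<And>L. (1 + a) * F (L + D) \<le> F L"
  shows "F (D * t) \<le> F 0 / (1 + a)^t"
proof (induction t)
  case 0 then show ?case by simp
next
  case (Suc t)
  have "(1+a) * F (D*t + D) \<le> F (D*t)" by (rule st)
  then have "F (D * Suc t) \<le> F (D*t) / (1+a)" using a by (simp add: field_simps mult.commute)
  also have "\<dots> \<le> F 0 / (1+a)^t / (1+a)" using Suc a by (intro divide_right_mono) auto
  also have "\<dots> = F 0 / (1+a)^Suc t" by (simp add: divide_divide_eq_left mult.commute)
  finally show ?case .
qed

lemma bern_sq:
  fixes a :: real assumes "a > 0" "s \<ge> 1"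
  shows "1 / (1 + a)^(2*s) \<le> 1 / (s * a)^2"
proof -
  have "1 + s*a \<le> (1+a)^s" using Bernoulli_inequality[of a s] assms by simp
  then have "(s*a)^2 \<le> ((1+a)^s)^2" using assms by (intro power_mono) auto
  then have "(s*a)^2 \<le> (1+a)^(2*s)" by (simp add: power_mult[symmetric] mult.commute)
  moreover have "(s*a)^2 > 0" using assms by simp
  ultimately show ?thesis by (simp add: frac_le)
qed

lemma Av_bound:
  assumes k: "k \<ge> 2" and u: "u \<in> Wd k m" and m: "m \<ge> 1" and s: "s \<ge> 1" and L: "4*m*s \<le> L"
  shows "real (card (Av k u L)) \<le> real k ^ L * (4 * real k ^ (2*m)) / (real s * real m)^2"
proof -
  define F where "F j = real (card (Av k u j)) / real k ^ j" for j
  have kp: "real k > 0" using k by simp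
  have cA: "real (card (Av k u j)) = real k ^ j * F j" for j using kp by (simp add: F_def)
  have nn: "F j \<ge> 0" for j by (simp add: F_def)
  have st: "real (card (Av k u (Suc j))) + real (card (Gf k u (Suc j))) \<le> real k * real (card (Av k u j))" for j
    using Av_step[of k u j] by (metis of_nat_add of_nat_le_iff of_nat_mult)
  have mono: "F (Suc j) \<le> F j" for j
  proof -
    have "real (card (Av k u (Suc j))) \<le> real k * real (card (Av k u j))" using st[of j] by simp
    then have "real k ^ Suc j * F (Suc j) \<le> real k ^ Suc j * F j" using cA by (simp add: algebra_simps)
    then show ?thesis using kp by simp
  qed
  have rec: "F j \<le> (\<Sum>s\<in>{1..m}. real k^s * (F (j+s-1) - F (j+s)))" for j
  proof -
    have "real (card (Av k u j)) \<le> (\<Sum>s\<in>{1..m}. real (card (Gf k u (j + s))))"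
      using Av_first[OF u m, of j] by (metis of_nat_le_iff of_nat_sum)
    also have "\<dots> \<le> (\<Sum>s\<in>{1..m}. real k * real (card (Av k u (j+s-1))) - real (card (Av k u (j+s))))"
    proof (rule sum_mono)
      fix s assume "s \<in> {1..m}"
      then have "j + s = Suc (j+s-1)" by auto
      then show "real (card (Gf k u (j + s))) \<le> real k * real (card (Av k u (j+s-1))) - real (card (Av k u (j+s)))"
        using st[of "j+s-1"] by simp
    qed
    also have "\<dots> = (\<Sum>s\<in>{1..m}. real k ^ j * (real k^s * (F (j+s-1) - F (j+s))))"
    proof (rule sum.cong)
      fix s assume "s \<in> {1..m}"
      then have e: "j + s = Suc (j+s-1)" by auto
      have "real k * real (card (Av k u (j+s-1))) = real k * (real k ^ (j+s-1) * F (j+s-1))" using cA by simp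
      also have "\<dots> = real k ^ (j + s) * F (j+s-1)" by (subst (2) e) simp
      finally show "real k * real (card (Av k u (j+s-1))) - real (card (Av k u (j+s))) = real k ^ j * (real k^s * (F (j+s-1) - F (j+s)))"
        using cA[of "j+s"] by (simp add: power_add algebra_simps)
    qed simp
    also have "\<dots> = real k ^ j * (\<Sum>s\<in>{1..m}. real k^s * (F (j+s-1) - F (j+s)))" by (simp add: sum_distrib_left)
    finally have "real k ^ j * F j \<le> real k ^ j * (\<Sum>s\<in>{1..m}. real k^s * (F (j+s-1) - F (j+s)))" using cA by simp
    then show ?thesis using kp by simp
  qed
  define a where "a = real m / (2 * real k ^ m)"
  have ap: "a > 0" using m kp by (simp add: a_def)
  have dstep: "(1 + a) * F (L' + 2*m) \<le> F L'" for L'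
    unfolding a_def by (rule decay_step) (use k m nn mono rec in auto)
  have it: "F (2*m * t) \<le> F 0 / (1+a)^t" for t
    by (rule decay_iter) (use ap dstep in auto)
  have F0: "F 0 \<le> 1"
  proof -
    have "card (Av k u 0) \<le> card (Wd k 0)" by (rule card_mono) (auto simp: Av_def)
    then show ?thesis by (simp add: F_def)
  qed
  have "F L \<le> F (2*m*(2*s))"
    using decseq_SucI[of F, OF mono] L by (simp add: decseq_def algebra_simps)
  also have "\<dots> \<le> F 0 / (1+a)^(2*s)" by (rule it)
  also have "\<dots> \<le> 1 / (1+a)^(2*s)" using F0 ap by (intro divide_right_mono) auto
  also have "\<dots> \<le> 1 / (s*a)^2" by (rule bern_sq) (use ap s in auto)
  also have "\<dots> = 4 * real k ^ (2*m) / (real s * real m)^2"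
    using kp m s by (simp add: a_def power_mult_distrib power_mult[symmetric] field_simps)
  finally have "F L \<le> 4 * real k ^ (2*m) / (real s * real m)^2" .
  then have "real k ^ L * F L \<le> real k ^ L * (4 * real k ^ (2*m) / (real s * real m)^2)"
    using kp by (intro mult_left_mono) auto
  then show ?thesis using cA by simp
qed

definition Sm :: "nat \<Rightarrow> nat \<Rightarrow> nat \<Rightarrow> nat list set" where
  "Sm k n m = {w \<in> Wd k n. is_border (take m w) w \<and> occ_count (take m w) w = 2}"

lemma closed_sub:
  assumes "n \<ge> 2"
  shows "{w. length w = n \<and> set w \<subseteq> {..<k} \<and> closed_word w} \<subseteq> (\<Union>m\<in>{1..<n}. Sm k n m)"
proof
  fix w assume "w \<in> {w. length w = n \<and> set w \<subseteq> {..<k} \<and> closed_word w}"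
  then have w: "length w = n" "set w \<subseteq> {..<k}" "closed_word w" by auto
  then obtain u where b: "is_border u w" and o: "occ_count u w = 2"
    using assms by (auto simp: closed_word_def)
  have "prefix u w" using b by (auto simp: is_border_def strict_prefix_def)
  then obtain zs where "w = u @ zs" by (auto simp: prefix_def)
  then have ut: "u = take (length u) w" by simp
  have "length u \<ge> 1" using b by (cases u) (auto simp: is_border_def)
  moreover have "length u < n" using b w(1) by (auto simp: is_border_def dest: prefix_length_less)
  moreover have "w \<in> Sm k n (length u)" using b o w ut by (auto simp: Sm_def Wd_def)
  ultimately show "w \<in> (\<Union>m\<in>{1..<n}. Sm k n m)" by auto
qed

lemma border_drop:
  assumes "is_border (take m w) w" "m \<le> length w"
  shows "take m w = drop (length w - m) w"
proof -
  have "suffix (take m w) w" using assms by (auto simp: is_border_def strict_suffix_def)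
  then have "w = take (length w - length (take m w)) w @ take m w" by (rule suffix_take)
  then have E: "w = take (length w - m) w @ take m w" using assms(2) by simp
  have "drop (length (take (length w - m) w)) (take (length w - m) w @ take m w) = take m w" by simp
  then have "drop (length (take (length w - m) w)) w = take m w" using E by metis
  then show ?thesis using assms(2) by simp
qed

lemma period_det:
  assumes lw: "length w = n" "length w' = n" and p: "p \<le> n" "p > 0"
    and bw: "take (n-p) w = drop p w" and bw': "take (n-p) w' = drop p w'"
    and t: "take p w = take p w'"
  shows "w = w'"
proof (rule nth_equalityI)
  show "length w = length w'" using lw by simp
  have "w ! i = w' ! i" if "i < n" for i
    using that
  proof (induction i rule: less_induct)
    case (less i)
    show ?case
    proof (cases "i < p")
      case True
      then show ?thesis using t by (metis nth_take)
    next
      case False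
      have e0: "x ! i = x ! (i - p)" if bx: "take (n-p) x = drop p x" and lx: "length x = n" for x
      proof -
        have "x ! i = drop p x ! (i - p)" using False lx less.prems by simp
        also have "\<dots> = take (n-p) x ! (i - p)" using bx by simp
        also have "\<dots> = x ! (i - p)" using False less.prems by simp
        finally show ?thesis .
      qed
      have e: "w ! i = w ! (i - p)" "w' ! i = w' ! (i - p)" using e0 bw bw' lw by auto
      have "w ! (i - p) = w' ! (i - p)" using less False p by (intro less.IH) auto
      then show ?thesis using e by simp
    qed
  qed
  then show "\<And>i. i < length w \<Longrightarrow> w ! i = w' ! i" using lw by simp
qed

lemma Sm_card_big:
  assumes "1 \<le> m" "m < n"
  shows "card (Sm k n m) \<le> k ^ (n - m)"
proof -
  have inj: "inj_on (take (n-m)) (Sm k n m)"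
  proof (rule inj_onI)
    fix w w' assume w: "w \<in> Sm k n m" and w': "w' \<in> Sm k n m" and eq: "take (n-m) w = take (n-m) w'"
    have lw: "length w = n" "length w' = n" using w w' by (auto simp: Sm_def Wd_def)
    have "take m w = drop (n-m) w" using border_drop[of m w] w lw assms by (auto simp: Sm_def)
    moreover have "take m w' = drop (n-m) w'" using border_drop[of m w'] w' lw assms by (auto simp: Sm_def)
    ultimately show "w = w'" using period_det[OF lw, of "n-m"] eq assms by auto
  qed
  have "take (n-m) ` Sm k n m \<subseteq> Wd k (n-m)"
    by (auto simp: Sm_def Wd_def dest: in_set_takeD)
  then have "card (take (n-m) ` Sm k n m) \<le> k^(n-m)" using card_mono[OF Wd_finite] by fastforce
  then show ?thesis using inj by (simp add: card_image)
qed

lemma occ_finite: "finite {i. i + length u \<le> length w \<and> take (length u) (drop i w) = u}"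
  by (rule finite_subset[of _ "{..length w}"]) auto

lemma Sm_small:
  assumes m: "1 \<le> m" "2*m \<le> n"
  shows "Sm k n m \<subseteq> (\<lambda>(u,v). u @ v @ u) ` (SIGMA u:Wd k m. Av k u (n - 2*m))"
proof
  fix w assume w: "w \<in> Sm k n m"
  have lw: "length w = n" and sw: "set w \<subseteq> {..<k}" using w by (auto simp: Sm_def Wd_def)
  define u where "u = take m w"
  define v where "v = take (n - 2*m) (drop m w)"
  have du: "drop (n-m) w = u" using border_drop[of m w] w lw m by (auto simp: Sm_def u_def)
  have wd: "w = u @ v @ u"
  proof -
    have "drop m w = v @ drop (n-2*m) (drop m w)" unfolding v_def by (rule append_take_drop_id[symmetric])
    also have "drop (n-2*m) (drop m w) = drop (n-m) w" using m by (simp add: add.commute)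
    finally have dmw: "drop m w = v @ u" using du by simp
    have "w = take m w @ drop m w" by simp
    also have "\<dots> = u @ v @ u" using dmw by (simp add: u_def)
    finally show ?thesis .
  qed
  have lu: "length u = m" using lw m by (simp add: u_def)
  have lv: "length v = n - 2*m" using lw m by (simp add: v_def)
  have oc: "occ_count u w = 2" using w by (simp add: Sm_def u_def)
  have nsub: "\<not> sublist u v"
  proof
    assume "sublist u v"
    then obtain p q where v: "v = p @ u @ q" by (auto simp: sublist_def)
    define i where "i = m + length p"
    let ?O = "{i. i + length u \<le> length w \<and> take (length u) (drop i w) = u}"
    have w2: "w = (u @ p) @ u @ q @ u" using wd v by simp
    have o1: "i \<in> ?O" using w2 lu lw by (auto simp: i_def)
    have o2: "0 \<in> ?O" using lu lw m by (simp add: u_def)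
    have o3: "n - m \<in> ?O" using lu lw m du by simp
    have d1: "i \<noteq> 0" using m by (simp add: i_def)
    have d2: "i \<noteq> n - m" using lv v lu m by (simp add: i_def)
    have d3: "0 \<noteq> n - m" using m by simp
    have sub: "{0, i, n-m} \<subseteq> ?O" using o1 o2 o3 by blast
    have c3: "card {0, i, n - m} = 3" using d1 d2 d3 by simp
    have "card {0, i, n-m} \<le> card ?O" by (rule card_mono[OF occ_finite sub])
    then have "3 \<le> card ?O" using c3 by simp
    then show False using oc by (simp add: occ_count_def)
  qed
  have "u \<in> Wd k m" using lu sw by (auto simp: Wd_def u_def dest: in_set_takeD)
  moreover have "v \<in> Av k u (n - 2*m)" using lv sw nsub by (auto simp: Av_def Wd_def v_def dest: in_set_takeD in_set_dropD)
  ultimately show "w \<in> (\<lambda>(u,v). u @ v @ u) ` (SIGMA u:Wd k m. Av k u (n - 2*m))" using wd by force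
qed

lemma Sm_card_small:
  assumes m: "1 \<le> m" "2*m \<le> n"
  shows "card (Sm k n m) \<le> (\<Sum>u\<in>Wd k m. card (Av k u (n - 2*m)))"
proof -
  have "card (Sm k n m) \<le> card ((\<lambda>(u,v). u @ v @ u) ` (SIGMA u:Wd k m. Av k u (n - 2*m)))"
    by (rule card_mono[OF _ Sm_small[OF m]]) simp
  also have "\<dots> \<le> card (SIGMA u:Wd k m. Av k u (n - 2*m))" by (rule card_image_le) simp
  also have "\<dots> = (\<Sum>u\<in>Wd k m. card (Av k u (n - 2*m)))" by (rule card_SigmaI) auto
  finally show ?thesis .
qed

lemma occ_nth:
  assumes lx: "length x = m" and lv: "length v = L" and i: "i < m + L" and j: "j < m"
    and h: "take m (drop i (x @ v @ x)) = x"
  shows "x ! j = (if i + j < m then x ! (i+j) else if i + j < m + L then v ! (i + j - m) else x ! (i + j - m - L))"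
proof -
  have "x ! j = take m (drop i (x @ v @ x)) ! j" using h by simp
  also have "\<dots> = drop i (x @ v @ x) ! j" by (rule nth_take[OF j])
  also have "\<dots> = (x @ v @ x) ! (i + j)" by (rule nth_drop) (use i lx lv in simp)
  finally show ?thesis using lx lv by (auto simp: nth_append)
qed

lemma uniq_det:
  assumes lu: "length u = m" and lu': "length u' = m" and lv: "length v = L" and Lm: "m \<le> L"
    and i0: "0 < i" and i1: "i < m + L"
    and h: "take m (drop i (u @ v @ u)) = u" and h': "take m (drop i (u' @ v @ u')) = u'"
  shows "u = u'"
proof (rule nth_equalityI)
  show "length u = length u'" using lu lu' by simp
  note e = occ_nth[OF lu lv i1 _ h] and e' = occ_nth[OF lu' lv i1 _ h']
  have "u ! j = u' ! j" if "j < m" for j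
  proof (cases "i < m")
    case True
    show ?thesis using that
    proof (induction "m - j" arbitrary: j rule: less_induct)
      case (less j)
      show ?case
      proof (cases "i + j < m")
        case c: True
        have "u ! (i+j) = u' ! (i+j)" using c i0 less.prems by (intro less.hyps) auto
        then show ?thesis using e[OF less.prems] e'[OF less.prems] c by simp
      next
        case c: False
        then have "i + j < m + L" using True less.prems Lm by simp
        then show ?thesis using e[OF less.prems] e'[OF less.prems] c by simp
      qed
    qed
  next
    case False
    show ?thesis using that
    proof (induction j rule: less_induct)
      case (less j)
      show ?case
      proof (cases "i + j < m + L")
        case c: True
        then show ?thesis using e[OF less.prems] e'[OF less.prems] c False by simp
      next
        case c: False
        have "u ! (i + j - m - L) = u' ! (i + j - m - L)" using c i1 less.prems by (intro less.IH) auto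
        then show ?thesis using e[OF less.prems] e'[OF less.prems] c False by simp
      qed
    qed
  qed
  then show "\<And>j. j < length u \<Longrightarrow> u ! j = u' ! j" using lu by simp
qed

lemma good_closed:
  assumes lu: "length u = m" and m: "m \<ge> 1" and lv: "length v = L"
    and good: "\<forall>i. 0 < i \<and> i < m + L \<longrightarrow> take m (drop i (u @ v @ u)) \<noteq> u"
  shows "closed_word (u @ v @ u)"
proof -
  let ?w = "u @ v @ u"
  have ne: "u \<noteq> []" using lu m by auto
  have b: "is_border u ?w" using ne
    by (auto simp: is_border_def strict_prefix_def strict_suffix_def prefix_def suffix_def)
  let ?O = "{i. i + length u \<le> length ?w \<and> take (length u) (drop i ?w) = u}"
  have "?O = {0, m + L}"
  proof
    show "?O \<subseteq> {0, m + L}"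
    proof
      fix i assume "i \<in> ?O"
      then have "i \<le> m + L" "take m (drop i ?w) = u" using lu lv by auto
      then show "i \<in> {0, m+L}" using good by (cases "i = 0"; cases "i = m + L") auto
    qed
  next
    show "{0, m + L} \<subseteq> ?O" using lu lv by auto
  qed
  then have "occ_count u ?w = 2" using m by (simp add: occ_count_def)
  then show ?thesis using b by (auto simp: closed_word_def)
qed

lemma closed_set_finite: "finite {w :: nat list. length w = n \<and> set w \<subseteq> {..<k} \<and> closed_word w}"
  by (rule finite_subset[OF _ Wd_finite[of k n]]) (auto simp: Wd_def)

lemma lower_count:
  assumes m: "m \<ge> 1" and Lm: "m \<le> L" and n: "n = 2*m + L"
  shows "k^m * k^L \<le> closed_count k n + n * k^L"
proof -
  let ?P = "Wd k m \<times> Wd k L"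
  let ?occ = "\<lambda>i (p :: nat list \<times> nat list). take m (drop i (fst p @ snd p @ fst p)) = fst p"
  define Good where "Good = {p \<in> ?P. \<forall>i. 0 < i \<and> i < m + L \<longrightarrow> \<not> ?occ i p}"
  define B where "B i = {p \<in> ?P. ?occ i p}" for i
  have fin: "finite ?P" by simp
  have cover: "?P \<subseteq> Good \<union> (\<Union>i\<in>{1..<m+L}. B i)"
    by (auto simp: Good_def B_def)
  have cB: "card (B i) \<le> k^L" if i: "i \<in> {1..<m+L}" for i
  proof -
    have "inj_on snd (B i)"
    proof (rule inj_onI)
      fix p q assume p: "p \<in> B i" and q: "q \<in> B i" and e: "snd p = snd q"
      obtain u v where pu: "p = (u, v)" by (cases p)
      obtain u' v' where qu: "q = (u', v')" by (cases q)
      have "u = u'"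
        by (rule uniq_det[of u m u' v L i]) (use p q pu qu e Lm i in \<open>auto simp: B_def Wd_def\<close>)
      then show "p = q" using pu qu e by simp
    qed
    moreover have "snd ` B i \<subseteq> Wd k L" by (auto simp: B_def)
    ultimately show ?thesis by (metis Wd_card Wd_finite card_image card_mono)
  qed
  have cG: "card Good \<le> closed_count k n"
  proof -
    have inj: "inj_on (\<lambda>(u,v). u @ v @ u) Good"
    proof (rule inj_onI)
      fix p q assume p: "p \<in> Good" and q: "q \<in> Good" and e: "(\<lambda>(u,v). u @ v @ u) p = (\<lambda>(u,v). u @ v @ u) q"
      obtain u v where pu: "p = (u, v)" by (cases p)
      obtain u' v' where qu: "q = (u', v')" by (cases q)
      have l: "length u = m" "length u' = m" using p q pu qu by (auto simp: Good_def Wd_def)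
      have "u @ (v @ u) = u' @ (v' @ u')" using e pu qu by simp
      then have "u = u'" "v @ u = v' @ u'" using l by (simp_all add: append_eq_append_conv)
      then show "p = q" using pu qu by simp
    qed
    have sub: "(\<lambda>(u,v). u @ v @ u) ` Good \<subseteq> {w. length w = n \<and> set w \<subseteq> {..<k} \<and> closed_word w}"
    proof
      fix w assume "w \<in> (\<lambda>(u,v). u @ v @ u) ` Good"
      then obtain u v where g: "(u, v) \<in> Good" and w: "w = u @ v @ u" by auto
      have l: "length u = m" "length v = L" "set u \<subseteq> {..<k}" "set v \<subseteq> {..<k}"
        using g by (auto simp: Good_def Wd_def)
      have "closed_word w" unfolding w
        by (rule good_closed[OF l(1) m l(2)]) (use g in \<open>auto simp: Good_def\<close>)
      then show "w \<in> {w. length w = n \<and> set w \<subseteq> {..<k} \<and> closed_word w}" using l w n by auto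
    qed
    have "card Good = card ((\<lambda>(u,v). u @ v @ u) ` Good)" using inj by (simp add: card_image)
    also have "\<dots> \<le> closed_count k n" unfolding closed_count_def
      by (rule card_mono[OF closed_set_finite sub])
    finally show ?thesis .
  qed
  have "k^m * k^L = card ?P" by (simp add: card_cartesian_product)
  also have "\<dots> \<le> card (Good \<union> (\<Union>i\<in>{1..<m+L}. B i))"
    by (rule card_mono[OF _ cover]) (auto simp: Good_def B_def)
  also have "\<dots> \<le> card Good + card (\<Union>i\<in>{1..<m+L}. B i)" by (rule card_Un_le)
  also have "card (\<Union>i\<in>{1..<m+L}. B i) \<le> (\<Sum>i\<in>{1..<m+L}. card (B i))" by (rule card_UN_le) simp
  also have "\<dots> \<le> (\<Sum>i\<in>{1..<m+L}. k^L)" by (rule sum_mono) (rule cB)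
  also have "\<dots> = (m + L - 1) * k^L" by simp
  also have "\<dots> \<le> n * k^L" using n by (intro mult_right_mono) auto
  finally show ?thesis using cG by linarith
qed

lemma pow_ge_12: "m \<ge> 7 \<Longrightarrow> 12 * m \<le> (2::nat)^m"
proof (induction m rule: dec_induct)
  case base then show ?case by simp
next
  case (step m) then show ?case by simp
qed

lemma small_bound:
  assumes k: "k \<ge> 2" and m: "m \<ge> 1" and mn: "12*m \<le> n"
  shows "real (card (Sm k n m)) \<le> 256 * real k ^ (n+m) / (real n)^2"
proof -
  define L where "L = n - 2*m"
  define s where "s = L div (4*m)"
  have L10: "10*m \<le> L" using mn by (simp add: L_def)
  have "(4*m) div (4*m) \<le> L div (4*m)" by (rule div_le_mono) (use L10 in simp)
  then have s1: "s \<ge> 1" using m by (simp add: s_def)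
  have sL: "4*m*s \<le> L" by (simp add: s_def mult.commute)
  have Lsm: "L < 4*m*(s+1)"
  proof -
    have "L = s * (4*m) + L mod (4*m)" unfolding s_def by (rule div_mult_mod_eq[symmetric])
    moreover have "L mod (4*m) < 4*m" using m by simp
    ultimately show ?thesis by (simp add: algebra_simps)
  qed
  have "real n / 8 \<le> real s * real m"
  proof -
    have "real L < real (4*m*(s+1))" using Lsm by (simp only: of_nat_less_iff)
    then have "real L < 4 * (real s * real m) + 4 * real m" by (simp add: algebra_simps)
    moreover have "real L = real n - 2 * real m" using mn by (simp add: L_def)
    moreover have "real (12 * m) \<le> real n" using mn by (simp only: of_nat_le_iff)
    then have "12 * real m \<le> real n" by simp
    ultimately show ?thesis by linarith
  qed
  then have sq: "(real n / 8)^2 \<le> (real s * real m)^2" using mn by (intro power_mono) auto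
  have np: "real n > 0" using mn m by simp
  have "real (card (Sm k n m)) \<le> (\<Sum>u\<in>Wd k m. real (card (Av k u L)))"
    using Sm_card_small[of m n k] m mn unfolding L_def by (simp add: of_nat_sum[symmetric] del: of_nat_sum)
  also have "\<dots> \<le> (\<Sum>u\<in>Wd k m. real k ^ L * (4 * real k ^ (2*m)) / (real s * real m)^2)"
    by (rule sum_mono, rule Av_bound) (use k m s1 sL in auto)
  also have "\<dots> = real k ^ m * (real k ^ L * (4 * real k ^ (2*m)) / (real s * real m)^2)" by simp
  also have "\<dots> \<le> real k ^ m * (real k ^ L * (4 * real k ^ (2*m)) / (real n / 8)^2)"
  proof (intro mult_left_mono divide_left_mono)
    show "(real n / 8)^2 \<le> (real s * real m)^2" by (rule sq)
    show "0 < (real s * real m)^2 * (real n / 8)^2" using np s1 m by simp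
  qed auto
  also have "\<dots> = 256 * (real k ^ m * real k ^ L * real k ^ (2*m)) / (real n)^2"
    by (simp add: field_simps power2_eq_square)
  also have "real k ^ m * real k ^ L * real k ^ (2*m) = real k ^ (n+m)"
    using mn by (simp add: L_def power_add[symmetric] add.commute)
  finally show ?thesis .
qed

lemma tail_geom:
  fixes K :: real assumes K: "K \<ge> 2"
  shows "(\<Sum>m\<in>{M..<M+d}. K ^ (M + d - m)) \<le> 2 * K ^ d"
proof (induction d arbitrary: M)
  case 0 then show ?case by simp
next
  case (Suc d)
  have "(\<Sum>m\<in>{M..<M+Suc d}. K ^ (M + Suc d - m)) = K ^ Suc d + (\<Sum>m\<in>{Suc M..<Suc M+d}. K ^ (Suc M + d - m))"
    by (subst sum.atLeast_Suc_lessThan) auto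
  also have "\<dots> \<le> K ^ Suc d + 2 * K^d" using Suc[of "Suc M"] by simp
  also have "\<dots> \<le> 2 * K ^ Suc d" using K by simp
  finally show ?case .
qed

lemma upper:
  assumes k: "k \<ge> 2" and n: "n \<ge> 100"
  shows "real (closed_count k n) \<le> 514 * real k ^ n / real n"
proof -
  let ?K = "real k"
  have Kp: "?K > 0" using k by simp
  have np: "real n > 0" using n by simp
  have ex: "n \<le> k ^ n"
  proof -
    have "n < 2^n" by (rule less_exp)
    also have "(2::nat)^n \<le> k^n" using k by (rule power_mono) simp
    finally show ?thesis by simp
  qed
  define M where "M = (LEAST M. n \<le> k ^ M)"
  have kM: "n \<le> k ^ M" unfolding M_def by (rule LeastI[of _ n]) (rule ex)
  have Mn: "M \<le> n" unfolding M_def by (rule Least_le) (rule ex)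
  have M1: "M \<ge> 1"
  proof (rule ccontr)
    assume "\<not> 1 \<le> M" then have "M = 0" by simp
    then show False using kM n by simp
  qed
  have kM1: "k ^ (M - 1) < n"
  proof -
    have "M - 1 < M" using M1 by simp
    then have "\<not> n \<le> k ^ (M - 1)" unfolding M_def by (rule not_less_Least)
    then show ?thesis by simp
  qed
  have small12: "12 * m \<le> n" if "1 \<le> m" "m < M" for m
  proof -
    have "2^m \<le> k^m" using k by (intro power_mono) auto
    also have "k^m \<le> k^(M-1)" using k that by (intro power_increasing) auto
    finally have "2^m < n" using kM1 by simp
    then show ?thesis using pow_ge_12[of m] n by (cases "m \<ge> 7") auto
  qed
  have "closed_count k n \<le> card (\<Union>m\<in>{1..<n}. Sm k n m)"
    unfolding closed_count_def
    by (rule card_mono[OF _ closed_sub]) (use n in \<open>auto simp: Sm_def\<close>)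
  also have "\<dots> \<le> (\<Sum>m\<in>{1..<n}. card (Sm k n m))" by (rule card_UN_le) simp
  finally have "real (closed_count k n) \<le> (\<Sum>m\<in>{1..<n}. real (card (Sm k n m)))"
    by (simp add: of_nat_sum[symmetric] del: of_nat_sum)
  also have "\<dots> = (\<Sum>m\<in>{1..<M}. real (card (Sm k n m))) + (\<Sum>m\<in>{M..<n}. real (card (Sm k n m)))"
    using M1 Mn by (simp add: sum.atLeastLessThan_concat)
  also have "(\<Sum>m\<in>{1..<M}. real (card (Sm k n m))) \<le> (\<Sum>m\<in>{1..<M}. 256 * ?K ^ (n+m) / (real n)^2)"
    by (rule sum_mono, rule small_bound) (use k small12 in auto)
  also have "\<dots> = 256 * ?K ^ n / (real n)^2 * (\<Sum>m\<in>{1..M-1}. ?K ^ m)"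
  proof -
    have "{1..<M} = {1..M-1}" using M1 by auto
    then show ?thesis by (simp add: sum_distrib_left power_add mult.assoc)
  qed
  also have "\<dots> \<le> 256 * ?K ^ n / (real n)^2 * (2 * ?K ^ (M-1))"
    by (rule mult_left_mono, rule geom_le) (use k np in auto)
  also have "\<dots> \<le> 256 * ?K ^ n / (real n)^2 * (2 * real n)"
  proof -
    have "real (k ^ (M-1)) \<le> real n" using kM1 by simp
    then show ?thesis using np Kp by (intro mult_left_mono) auto
  qed
  also have "\<dots> = 512 * ?K ^ n / real n" using np by (simp add: power2_eq_square)
  also have "(\<Sum>m\<in>{M..<n}. real (card (Sm k n m))) \<le> (\<Sum>m\<in>{M..<n}. ?K ^ (n - m))"
  proof (rule sum_mono)
    fix m assume "m \<in> {M..<n}"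
    then have "1 \<le> m" "m < n" using M1 by auto
    then have "card (Sm k n m) \<le> k ^ (n-m)" by (rule Sm_card_big)
    then show "real (card (Sm k n m)) \<le> ?K ^ (n-m)" by (metis of_nat_le_iff of_nat_power)
  qed
  also have "\<dots> \<le> 2 * ?K ^ (n - M)"
    using tail_geom[of ?K M "n - M"] k Mn by simp
  also have "\<dots> \<le> 2 * ?K ^ n / real n"
  proof -
    have "?K ^ (n - M) * ?K ^ M = ?K ^ n" using Mn by (simp add: power_add[symmetric])
    moreover have "real n \<le> ?K ^ M" using kM by (metis of_nat_le_iff of_nat_power)
    ultimately have "?K ^ (n - M) * real n \<le> ?K ^ n"
      by (metis Kp mult_left_mono zero_le_power less_imp_le)
    then show ?thesis using np by (simp add: field_simps)
  qed
  finally show ?thesis by (simp add: field_simps)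
qed

lemma lower:
  assumes k: "k \<ge> 2" and n: "n \<ge> 22"
  shows "1 / (4 * real k) * real k ^ n / real n \<le> real (closed_count k n)"
proof -
  let ?K = "real k"
  have Kp: "?K > 0" using k by simp
  have np: "real n > 0" using n by simp
  have ex: "2*n \<le> k ^ (2*n)"
  proof -
    have "2*n < 2^(2*n)" by (rule less_exp)
    also have "(2::nat)^(2*n) \<le> k^(2*n)" using k by (rule power_mono) simp
    finally show ?thesis by simp
  qed
  define m where "m = (LEAST m. 2*n \<le> k ^ m)"
  have km: "2*n \<le> k ^ m" unfolding m_def by (rule LeastI[of _ "2*n"]) (rule ex)
  have m1: "m \<ge> 1"
  proof (rule ccontr)
    assume "\<not> 1 \<le> m" then have "m = 0" by simp
    then show False using km n by simp
  qed
  have km1: "k ^ (m - 1) < 2*n"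
  proof -
    have "m - 1 < m" using m1 by simp
    then have "\<not> 2*n \<le> k ^ (m - 1)" unfolding m_def by (rule not_less_Least)
    then show ?thesis by simp
  qed
  have m3: "3 * m \<le> n"
  proof (rule ccontr)
    assume a: "\<not> 3 * m \<le> n"
    have "2^(m-1) \<le> k^(m-1)" using k by (intro power_mono) auto
    then have "2^(m-1) < 2*n" using km1 by simp
    show False
    proof (cases "m \<ge> 8")
      case True
      then have "12 * (m-1) \<le> 2^(m-1)" by (intro pow_ge_12) simp
      then show False using a \<open>2^(m-1) < 2*n\<close> True by simp
    next
      case False
      then show False using a n by simp
    qed
  qed
  define L where "L = n - 2*m"
  have Lm: "m \<le> L" and nL: "n = 2*m + L" using m3 by (auto simp: L_def)
  have lc: "k^m * k^L \<le> closed_count k n + n * k^L" by (rule lower_count[OF m1 Lm nL])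
  then have lcr: "?K^m * ?K^L \<le> real (closed_count k n) + real n * ?K^L"
    by (metis of_nat_add of_nat_le_iff of_nat_mult of_nat_power)
  have kmr: "2 * real n \<le> ?K ^ m" using km by (metis of_nat_le_iff of_nat_mult of_nat_numeral of_nat_power)
  have km1r: "?K ^ (m-1) < 2 * real n" using km1 by (metis of_nat_less_iff of_nat_mult of_nat_numeral of_nat_power)
  have "real n * ?K^L \<le> ?K^m * ?K^L / 2" using kmr Kp by (simp add: field_simps)
  then have C: "?K^m * ?K^L / 2 \<le> real (closed_count k n)" using lcr by linarith
  have Km: "?K ^ m = ?K * ?K^(m-1)" using m1 by (simp add: power_eq_if)
  have e: "n = m + (m + L)" using nL by simp
  have "?K ^ n = ?K ^ m * ?K ^ (m + L)" by (simp only: e power_add)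
  also have "\<dots> = ?K * ?K^(m-1) * (?K^m * ?K^L)" using Km by (simp add: power_add)
  also have "\<dots> \<le> ?K * (2 * real n) * (?K^m * ?K^L)"
    using km1r Kp by (intro mult_right_mono mult_left_mono) auto
  also have "\<dots> \<le> ?K * (2 * real n) * (2 * real (closed_count k n))"
    using C Kp np by (intro mult_left_mono) auto
  finally have "?K ^ n \<le> 4 * ?K * real n * real (closed_count k n)" by (simp add: algebra_simps)
  then show ?thesis using Kp np by (simp add: field_simps)
qed

theorem theorem1:
  fixes k :: nat
  assumes "k \<ge> 2"
  shows "(\<exists>(N::real) (c::real). N > 0 \<and> c > 0 \<and> (\<forall>n::nat. real n > N \<longrightarrow>
            real (closed_count k n) \<ge> c * real k ^ n / real n))
       \<and> (\<exists>(N'::real) (c'::real). N' > 0 \<and> c' > 0 \<and> (\<forall>n::nat. real n > N' \<longrightarrow>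
            real (closed_count k n) \<le> c' * real k ^ n / real n))"
proof
  show "\<exists>(N::real) (c::real). N > 0 \<and> c > 0 \<and> (\<forall>n::nat. real n > N \<longrightarrow>
            real (closed_count k n) \<ge> c * real k ^ n / real n)"
  proof (intro exI conjI allI impI)
    show "(21::real) > 0" by simp
    show "1 / (4 * real k) > 0" using assms by simp
    fix n :: nat assume "real n > 21"
    then have "n \<ge> 22" by simp
    then show "1 / (4 * real k) * real k ^ n / real n \<le> real (closed_count k n)"
      by (rule lower[OF assms])
  qed
  show "\<exists>(N'::real) (c'::real). N' > 0 \<and> c' > 0 \<and> (\<forall>n::nat. real n > N' \<longrightarrow>
            real (closed_count k n) \<le> c' * real k ^ n / real n)"
  proof (intro exI conjI allI impI)
    show "(100::real) > 0" by simp
    show "(514::real) > 0" by simp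
    fix n :: nat assume "real n > 100"
    then have "n \<ge> 100" by simp
    then show "real (closed_count k n) \<le> 514 * real k ^ n / real n"
      by (rule upper[OF assms])
  qed
qed

end
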